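(* Let $A$ be a real $2\times2$ matrix and $B=TAT$ where $T=\begin{bmatrix}-1&0\\0&1\end{bmatrix}$. Then $\sigma_{\mathcal{K}}(A)=\sigma_{\mathcal{K}}(B)$, $\sigma_{\mathcal{K}}^{int}(A)=\sigma_{\mathcal{K}}^{int}(B)$ and $\sigma_{\mathcal{K}}^{bd}(A)=\sigma_{\mathcal{K}}^{bd}(B)$. Moreover, $\lambda$ is a type $+$ boundary L-eigenvalue of $A$ if and only if $\lambda$ is a type $-$ boundary L-eigenvalue of $B$.
   Context: Lorentz cone $\mathcal{K}=\{(x_1,x_2)^T:|x_1|\le x_2\}$. For a real $2\times 2$ matrix $A$, a real $\lambda$ is an L-eigenvalue if there is a nonzero $x\in\mathcal{K}$ with $(A-\lambda I)x\in\mathcal{K}$ and $x^T(A-\lambda I)x=0$; $\sigma_{\mathcal{K}}(A)$ is the set of L-eigenvalues; $\sigma^{int}_{\mathcal{K}}(A)$ (resp. $\sigma^{bd}_{\mathcal{K}}(A)$) is the set of those having an associated such $x$ in the interior (resp. on the boundary) of $\mathcal{K}$. For $A=\begin{bmatrix}a&b\\c&d\end{bmatrix}$, $\lambda$ is a type $+$ boundary L-eigenvalue if $\lambda=\frac{a+d+b+c}{2}$ and $a-d\le c-b$, and a type $-$ boundary L-eigenvalue if $\lambda=\frac{a+d-b-c}{2}$ and $a-d\le b-c$. *)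

theory Defs
  imports "HOL-Analysis.Analysis"
begin

definition lorentz_cone :: "(real^2) set" where
  "lorentz_cone = {x. \<bar>x $ 1\<bar> \<le> x $ 2}"

definition L_eig_vec :: "real^2^2 \<Rightarrow> real \<Rightarrow> real^2 \<Rightarrow> bool" where
  "L_eig_vec A l x \<longleftrightarrow> x \<noteq> 0 \<and> x \<in> lorentz_cone \<and>
     (A - l *\<^sub>R mat 1) *v x \<in> lorentz_cone \<and> x \<bullet> ((A - l *\<^sub>R mat 1) *v x) = 0"

definition L_spectrum :: "real^2^2 \<Rightarrow> real set" where
  "L_spectrum A = {l. \<exists>x. L_eig_vec A l x}"

definition L_spectrum_int :: "real^2^2 \<Rightarrow> real set" where
  "L_spectrum_int A = {l. \<exists>x. L_eig_vec A l x \<and> x \<in> interior lorentz_cone}"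

definition L_spectrum_bd :: "real^2^2 \<Rightarrow> real set" where
  "L_spectrum_bd A = {l. \<exists>x. L_eig_vec A l x \<and> x \<in> frontier lorentz_cone}"

text \<open>A = [[a,b],[c,d]] with a = A$1$1, b = A$1$2, c = A$2$1, d = A$2$2.\<close>
definition bd_type_plus :: "real^2^2 \<Rightarrow> real \<Rightarrow> bool" where
  "bd_type_plus A l \<longleftrightarrow> l = (A$1$1 + A$2$2 + A$1$2 + A$2$1) / 2 \<and>
      A$1$1 - A$2$2 \<le> A$2$1 - A$1$2"

definition bd_type_minus :: "real^2^2 \<Rightarrow> real \<Rightarrow> bool" where
  "bd_type_minus A l \<longleftrightarrow> l = (A$1$1 + A$2$2 - A$1$2 - A$2$1) / 2 \<and>
      A$1$1 - A$2$2 \<le> A$1$2 - A$2$1"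

definition T_refl :: "real^2^2" where
  "T_refl = (\<chi> i j. if i = j then (if i = 1 then -1 else 1) else 0)"

end

theory Submission imports Defs begin
lemma TT: "T_refl ** T_refl = mat 1"
  by (simp add: T_refl_def matrix_matrix_mult_def mat_def vec_eq_iff sum_2 forall_2)
lemma Tv: "T_refl *v x = (\<chi> i. if i = 1 then - x$1 else x$i)"
  by (simp add: T_refl_def matrix_vector_mult_def vec_eq_iff sum_2 forall_2)
lemma TK: "T_refl *v x \<in> lorentz_cone \<longleftrightarrow> x \<in> lorentz_cone"
  by (simp add: Tv lorentz_cone_def)
lemma Tinv: "T_refl *v (T_refl *v x) = x"
  by (simp add: matrix_vector_mul_assoc TT)
lemma Tdot: "(T_refl *v x) \<bullet> (T_refl *v y) = x \<bullet> y"
  by (simp add: Tv inner_vec_def sum_2)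
lemma Tz: "T_refl *v x = 0 \<longleftrightarrow> x = 0"
  by (metis Tinv matrix_vector_mult_0_right)
lemma Tint1: "T_refl *v x \<in> interior lorentz_cone \<Longrightarrow> x \<in> interior lorentz_cone"
proof -
  let ?f = "\<lambda>x. T_refl *v x"
  have o: "open (?f -` interior lorentz_cone)"
    by (intro continuous_open_vimage open_interior) (simp add: linear_continuous_at matrix_vector_mul_linear)
  have s: "?f -` interior lorentz_cone \<subseteq> lorentz_cone"
    using interior_subset TK by blast
  assume "?f x \<in> interior lorentz_cone"
  then show ?thesis using interior_maximal[OF s o] by blast
qed
lemma Tint: "T_refl *v x \<in> interior lorentz_cone \<longleftrightarrow> x \<in> interior lorentz_cone"
  using Tint1[of x] Tint1[of "T_refl *v x"] Tinv by auto
lemma closedK: "closed lorentz_cone"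
proof -
  have "lorentz_cone = {x. (\<lambda>x. \<bar>x$1\<bar> - x$2) x \<le> 0}" by (auto simp: lorentz_cone_def)
  moreover have "closed {x. (\<lambda>x::real^2. \<bar>x$1\<bar> - x$2) x \<le> 0}"
    by (intro closed_Collect_le continuous_intros) 
  ultimately show ?thesis by simp
qed
lemma front: "x \<in> lorentz_cone \<Longrightarrow> x \<in> frontier lorentz_cone \<longleftrightarrow> x \<notin> interior lorentz_cone"
  using closedK by (simp add: frontier_def closure_closed)
lemma transf: "L_eig_vec A l x \<Longrightarrow> L_eig_vec (T_refl ** A ** T_refl) l (T_refl *v x)"
proof -
  have e: "T_refl ** A ** T_refl - l *\<^sub>R mat 1 = T_refl ** (A - l *\<^sub>R mat 1) ** T_refl"
    by (simp add: T_refl_def matrix_matrix_mult_def mat_def vec_eq_iff forall_2 sum_2)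
  assume "L_eig_vec A l x"
  then show ?thesis unfolding L_eig_vec_def e
    by (simp add: matrix_vector_mul_assoc[symmetric] Tinv TK Tdot Tz)
qed
lemma TAT_back: "T_refl ** (T_refl ** A ** T_refl) ** T_refl = A"
proof -
  have "T_refl ** (T_refl ** A ** T_refl) ** T_refl = (T_refl ** T_refl) ** A ** (T_refl ** T_refl)"
    by (simp add: matrix_mul_assoc)
  then show ?thesis by (simp add: TT)
qed

theorem corollary3p6:
  fixes A :: "real^2^2"
  defines "B \<equiv> T_refl ** A ** T_refl"
  shows "L_spectrum A = L_spectrum B \<and> L_spectrum_int A = L_spectrum_int B \<and>
         L_spectrum_bd A = L_spectrum_bd B \<and>
         (\<forall>l. bd_type_plus A l \<longleftrightarrow> bd_type_minus B l)"
proof -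
  have AB: "A = T_refl ** B ** T_refl" unfolding B_def by (simp add: TAT_back)
  have F: "L_eig_vec A l x \<Longrightarrow> L_eig_vec B l (T_refl *v x)" for l x
    unfolding B_def by (rule transf)
  have G: "L_eig_vec B l x \<Longrightarrow> L_eig_vec A l (T_refl *v x)" for l x
    by (subst AB) (rule transf)
  have K: "L_eig_vec M l x \<Longrightarrow> x \<in> lorentz_cone" for M l x by (simp add: L_eig_vec_def)
  have s1: "L_spectrum A = L_spectrum B"
    unfolding L_spectrum_def using F G by blast
  have s2: "L_spectrum_int A = L_spectrum_int B"
    unfolding L_spectrum_int_def using F G Tint by blast
  have s3: "L_spectrum_bd A = L_spectrum_bd B"
    unfolding L_spectrum_bd_def
  proof (intro set_eqI iffI; simp)
    fix l assume "\<exists>x. L_eig_vec A l x \<and> x \<in> frontier lorentz_cone"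
    then obtain x where "L_eig_vec A l x" "x \<in> frontier lorentz_cone" by blast
    then show "\<exists>x. L_eig_vec B l x \<and> x \<in> frontier lorentz_cone"
      using F[of l x] K[of A l x] K[of B l "T_refl *v x"] front Tint by blast
  next
    fix l assume "\<exists>x. L_eig_vec B l x \<and> x \<in> frontier lorentz_cone"
    then obtain x where "L_eig_vec B l x" "x \<in> frontier lorentz_cone" by blast
    then show "\<exists>x. L_eig_vec A l x \<and> x \<in> frontier lorentz_cone"
      using G[of l x] K[of B l x] K[of A l "T_refl *v x"] front Tint by blast
  qed
  have s4: "\<forall>l. bd_type_plus A l \<longleftrightarrow> bd_type_minus B l"
    unfolding B_def bd_type_plus_def bd_type_minus_def
    by (simp add: T_refl_def matrix_matrix_mult_def sum_2; auto)
  show ?thesis using s1 s2 s3 s4 by blast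
qed

end
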